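(* Let $\mathcal{X},\mathcal{Y}$ be finite sets and $p(X,Y)$ a distribution on $\mathcal{X}\times\mathcal{Y}$ with fully supported marginals. Let $q\in C(\mathcal{X}\times\mathcal{Y},\mathcal{T})$ satisfy $D(q(T)\|\tilde q(T))=D(p(X,Y)\|p(X)p(Y))$, and define $q'\in C(\mathcal{X}\times\mathcal{Y},\mathcal{T})$ by $q'(t|x,y)=\sum_{j=1}^n q(t|\mathcal{T}^q_j)\,q(\mathcal{T}^q_j|x,y)$ for $(x,y)\in\mathcal{S}$ and $q'(t|x,y)=q(t|x,y)$ for $(x,y)\notin\mathcal{S}$. Then: (i) for $(x,y)\in\mathcal{S}$ and every $j$, $q(\mathcal{T}^q_j|x,y)=\delta_{(x,y)\in\mathcal{S}_j}$; (ii) $q'(T)=q(T)$; (iii) $\mathcal{T}^q_j=\mathcal{T}^{q'}_j$ for all $j$; (iv) $I_q(X,Y;T)\ge I_{q'}(X,Y;T)$, with equality if and only if $q=q'$.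
   Context: $\mathcal{T}:=\mathbb{N}$; $C(\mathcal{A},\mathcal{B})$ is the set of channels from $\mathcal{A}$ to $\mathcal{B}$. For a channel $r\in C(\mathcal{X}\times\mathcal{Y},\mathcal{T})$, $r(T)$ and $\tilde r(T)$ are the marginals on $\mathcal{T}$ of $p(x,y)r(t|x,y)$ and $p(x)p(y)r(t|x,y)$, and $I_r(X,Y;T)$ is the mutual information under $p(x,y)r(t|x,y)$; $D$ is KL divergence. For $A\subseteq\mathcal{T}$: $q(A)=\sum_{t\in A}q(t)$, $q(A|x,y)=\sum_{t\in A}q(t|x,y)$, $q(t|A)=\frac{q(t)}{q(A)}\delta_{t\in A}$. $\mathcal{S}=\operatorname{supp}p(X,Y)$; $(x,y)\sim(x',y')$ iff $\frac{p(x,y)}{p(x)p(y)}=\frac{p(x',y')}{p(x')p(y')}$, whose classes contained in $\mathcal{S}$ are $\mathcal{S}_1,\dots,\mathcal{S}_n$. For a channel $r$, $\mathcal{T}^r_j:=\{t\in\mathcal{T}:\exists(x,y)\in\mathcal{S}_j,\ r(t|x,y)>0\}$. *)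

theory Defs
  imports "HOL-Analysis.Analysis"
begin

definition kl_div :: "'i set \<Rightarrow> ('i \<Rightarrow> real) \<Rightarrow> ('i \<Rightarrow> real) \<Rightarrow> ereal" where
  "kl_div A P Q =
     (if \<exists>a\<in>A. P a > 0 \<and> Q a = 0 then PInfty
      else if (\<lambda>a. if P a = 0 then 0 else P a * ln (P a / Q a)) summable_on A
      then ereal (infsum (\<lambda>a. if P a = 0 then 0 else P a * ln (P a / Q a)) A)
      else PInfty)"

definition is_distr :: "'a set \<Rightarrow> 'b set \<Rightarrow> ('a \<Rightarrow> 'b \<Rightarrow> real) \<Rightarrow> bool" where
  "is_distr X Y p \<longleftrightarrow> (\<forall>x\<in>X. \<forall>y\<in>Y. p x y \<ge> 0) \<and> (\<Sum>(x,y)\<in>X \<times> Y. p x y) = 1"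

definition margX :: "'b set \<Rightarrow> ('a \<Rightarrow> 'b \<Rightarrow> real) \<Rightarrow> 'a \<Rightarrow> real" where
  "margX Y p x = (\<Sum>y\<in>Y. p x y)"

definition margY :: "'a set \<Rightarrow> ('a \<Rightarrow> 'b \<Rightarrow> real) \<Rightarrow> 'b \<Rightarrow> real" where
  "margY X p y = (\<Sum>x\<in>X. p x y)"

definition is_channel :: "'a set \<Rightarrow> 'b set \<Rightarrow> ('a \<Rightarrow> 'b \<Rightarrow> nat \<Rightarrow> real) \<Rightarrow> bool" where
  "is_channel X Y r \<longleftrightarrow> (\<forall>x\<in>X. \<forall>y\<in>Y. (\<forall>t. r x y t \<ge> 0) \<and> (r x y has_sum 1) UNIV)"

definition outT :: "'a set \<Rightarrow> 'b set \<Rightarrow> ('a \<Rightarrow> 'b \<Rightarrow> real) \<Rightarrow> ('a \<Rightarrow> 'b \<Rightarrow> nat \<Rightarrow> real) \<Rightarrow> nat \<Rightarrow> real" where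
  "outT X Y p r t = (\<Sum>(x,y)\<in>X \<times> Y. p x y * r x y t)"

text \<open>tilde r(T): marginal of p(x) p(y) r(t|x,y) on T.\<close>
definition outT_ind :: "'a set \<Rightarrow> 'b set \<Rightarrow> ('a \<Rightarrow> 'b \<Rightarrow> real) \<Rightarrow> ('a \<Rightarrow> 'b \<Rightarrow> nat \<Rightarrow> real) \<Rightarrow> nat \<Rightarrow> real" where
  "outT_ind X Y p r t = (\<Sum>(x,y)\<in>X \<times> Y. margX Y p x * margY X p y * r x y t)"

definition mutinf :: "'a set \<Rightarrow> 'b set \<Rightarrow> ('a \<Rightarrow> 'b \<Rightarrow> real) \<Rightarrow> ('a \<Rightarrow> 'b \<Rightarrow> nat \<Rightarrow> real) \<Rightarrow> ereal" where
  "mutinf X Y p r = kl_div ((X \<times> Y) \<times> UNIV)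
      (\<lambda>((x,y),t). p x y * r x y t) (\<lambda>((x,y),t). p x y * outT X Y p r t)"

definition dep_div :: "'a set \<Rightarrow> 'b set \<Rightarrow> ('a \<Rightarrow> 'b \<Rightarrow> real) \<Rightarrow> ereal" where
  "dep_div X Y p = kl_div (X \<times> Y) (\<lambda>(x,y). p x y) (\<lambda>(x,y). margX Y p x * margY X p y)"

definition supp :: "'a set \<Rightarrow> 'b set \<Rightarrow> ('a \<Rightarrow> 'b \<Rightarrow> real) \<Rightarrow> ('a \<times> 'b) set" where
  "supp X Y p = {(x,y). x \<in> X \<and> y \<in> Y \<and> p x y > 0}"

definition pmi_ratio :: "'a set \<Rightarrow> 'b set \<Rightarrow> ('a \<Rightarrow> 'b \<Rightarrow> real) \<Rightarrow> 'a \<Rightarrow> 'b \<Rightarrow> real" where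
  "pmi_ratio X Y p x y = p x y / (margX Y p x * margY X p y)"

definition supp_classes :: "'a set \<Rightarrow> 'b set \<Rightarrow> ('a \<Rightarrow> 'b \<Rightarrow> real) \<Rightarrow> ('a \<times> 'b) set set" where
  "supp_classes X Y p =
     (\<lambda>(x,y). {(x',y') \<in> supp X Y p. pmi_ratio X Y p x' y' = pmi_ratio X Y p x y}) ` supp X Y p"

definition Tset :: "('a \<Rightarrow> 'b \<Rightarrow> nat \<Rightarrow> real) \<Rightarrow> ('a \<times> 'b) set \<Rightarrow> nat set" where
  "Tset r C = {t. \<exists>(x,y)\<in>C. r x y t > 0}"

definition condT :: "'a set \<Rightarrow> 'b set \<Rightarrow> ('a \<Rightarrow> 'b \<Rightarrow> real) \<Rightarrow> ('a \<Rightarrow> 'b \<Rightarrow> nat \<Rightarrow> real) \<Rightarrow> nat set \<Rightarrow> nat \<Rightarrow> real" where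
  "condT X Y p r A t = (if t \<in> A then outT X Y p r t / infsum (outT X Y p r) A else 0)"

definition qprime :: "'a set \<Rightarrow> 'b set \<Rightarrow> ('a \<Rightarrow> 'b \<Rightarrow> real) \<Rightarrow> ('a \<Rightarrow> 'b \<Rightarrow> nat \<Rightarrow> real) \<Rightarrow> 'a \<Rightarrow> 'b \<Rightarrow> nat \<Rightarrow> real" where
  "qprime X Y p q x y t =
     (if (x,y) \<in> supp X Y p
      then (\<Sum>C\<in>supp_classes X Y p. condT X Y p q (Tset q C) t * infsum (q x y) (Tset q C))
      else q x y t)"

end

theory Submission
  imports Defs
begin

lemma has_sum_diff':
  fixes f g :: "'c \<Rightarrow> real"
  assumes "(f has_sum a) A" "(g has_sum b) A"
  shows "((\<lambda>x. f x - g x) has_sum (a - b)) A"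
proof -
  have "((\<lambda>x. - g x) has_sum (- b)) A" using assms(2) by (simp add: has_sum_uminus)
  from has_sum_add[OF assms(1) this] show ?thesis by simp
qed

lemma has_sum_finsum:
  fixes f :: "'i \<Rightarrow> 'c \<Rightarrow> real"
  assumes "finite I" "\<And>i. i \<in> I \<Longrightarrow> (f i has_sum s i) A"
  shows "((\<lambda>x. \<Sum>i\<in>I. f i x) has_sum (\<Sum>i\<in>I. s i)) A"
  using assms
proof (induction I rule: finite_induct)
  case empty then show ?case by simp
next
  case (insert i I)
  have "((\<lambda>x. f i x + (\<Sum>j\<in>I. f j x)) has_sum (s i + (\<Sum>j\<in>I. s j))) A"
    by (rule has_sum_add) (use insert in auto)
  then show ?case using insert by simp
qed

lemma has_sum_row:
  fixes F :: "'i \<times> 'c \<Rightarrow> real"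
  shows "((\<lambda>t. F (i,t)) has_sum s) B \<longleftrightarrow> (F has_sum s) ({i} \<times> B)"
proof -
  have "bij_betw (\<lambda>t. (i,t)) B ({i} \<times> B)" by (auto simp: bij_betw_def inj_on_def)
  from has_sum_reindex_bij_betw[OF this, of F s] show ?thesis by simp
qed

lemma has_sum_prod_finite:
  fixes F :: "'i \<times> 'c \<Rightarrow> real"
  assumes "finite I" "\<And>i. i \<in> I \<Longrightarrow> ((\<lambda>t. F (i,t)) has_sum s i) B"
  shows "(F has_sum (\<Sum>i\<in>I. s i)) (I \<times> B)"
proof -
  have "(F has_sum (\<Sum>i\<in>I. s i)) (\<Union>i\<in>I. {i} \<times> B)"
    by (rule sum_has_sum) (use assms in \<open>auto simp: has_sum_row\<close>)
  moreover have "(\<Union>i\<in>I. {i} \<times> B) = I \<times> B" by auto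
  ultimately show ?thesis by simp
qed

lemma summable_row:
  fixes F :: "'i \<times> 'c \<Rightarrow> real"
  assumes "F summable_on (I \<times> B)" "i \<in> I"
  shows "(\<lambda>t. F (i,t)) summable_on B"
proof -
  have "F summable_on ({i} \<times> B)" by (rule summable_on_subset[OF assms(1)]) (use assms in auto)
  then show ?thesis unfolding summable_on_def by (simp add: has_sum_row)
qed

lemma pt_ineq:
  fixes P Q K R :: real
  assumes P: "P \<ge> 0" and Q: "Q > 0" and K: "K \<ge> 0" and R: "R > 0"
  shows "0 \<le> (if P = 0 then 0 else P * ln (P / Q)) * K - P * K * ln R - P * K + R * Q * K"
    and "(if P = 0 then 0 else P * ln (P / Q)) * K - P * K * ln R - P * K + R * Q * K = 0 \<Longrightarrow> K > 0
         \<Longrightarrow> P > 0 \<and> P / Q = R"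
proof -
  define z where "z = R * Q / P"
  have main: "(if P = 0 then 0 else P * ln (P / Q)) * K - P * K * ln R - P * K + R * Q * K
      = (if P = 0 then R * Q * K else K * P * (z - 1 - ln z))" if "P > 0 \<or> P = 0"
  proof (cases "P = 0")
    case True then show ?thesis by simp
  next
    case False
    then have Pp: "P > 0" using P by simp
    have "ln z = ln R + ln Q - ln P" unfolding z_def using Pp Q R
      by (simp add: ln_div ln_mult)
    moreover have "ln (P / Q) = ln P - ln Q" using Pp Q by (simp add: ln_div)
    moreover have "R * Q = z * P" unfolding z_def using Pp by simp
    ultimately have lzR: "ln (P / Q) = ln R - ln z" and RQ: "R * Q = z * P" by linarith+
    have RQ': "Q * R = P * z" using RQ by (simp add: mult.commute)
    show ?thesis using False by (simp add: lzR RQ RQ' algebra_simps)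
  qed
  have zpos: "P > 0 \<Longrightarrow> z > 0" unfolding z_def using Q R by simp
  show "0 \<le> (if P = 0 then 0 else P * ln (P / Q)) * K - P * K * ln R - P * K + R * Q * K"
  proof (cases "P = 0")
    case True then show ?thesis using Q K R by simp
  next
    case False
    then have Pp: "P > 0" using P by simp
    have "ln z \<le> z - 1" using ln_le_minus_one[OF zpos[OF Pp]] .
    then have "0 \<le> K * P * (z - 1 - ln z)" using K Pp by simp
    then show ?thesis using main False Pp by simp
  qed
  assume eq: "(if P = 0 then 0 else P * ln (P / Q)) * K - P * K * ln R - P * K + R * Q * K = 0"
    and Kp: "K > 0"
  show "P > 0 \<and> P / Q = R"
  proof (cases "P = 0")
    case True then show ?thesis using eq main Q Kp R by simp
  next
    case False
    then have Pp: "P > 0" using P by simp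
    then have "K * P * (z - 1 - ln z) = 0" using main eq False by simp
    then have "ln z = z - 1" using Kp Pp by simp
    then have "z = 1" using ln_eq_minus_one zpos Pp by blast
    then show ?thesis using Pp Q unfolding z_def by (simp add: field_simps)
  qed
qed

lemma kl_div_fin:
  assumes "\<not> (\<exists>a\<in>B. Pf a > 0 \<and> Qf a = 0)"
    and "((\<lambda>a. if Pf a = 0 then 0 else Pf a * ln (Pf a / Qf a)) has_sum I) B"
  shows "kl_div B Pf Qf = ereal I"
  using assms unfolding kl_div_def has_sum_iff by simp

lemma kl_div_inf:
  assumes "\<not> (\<lambda>a. if Pf a = 0 then 0 else Pf a * ln (Pf a / Qf a)) summable_on B"
  shows "kl_div B Pf Qf = PInfty"
  using assms unfolding kl_div_def by simp

lemma kl_div_finD: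
  assumes "kl_div B Pf Qf = ereal I"
  shows "((\<lambda>a. if Pf a = 0 then 0 else Pf a * ln (Pf a / Qf a)) has_sum I) B"
  using assms unfolding kl_div_def has_sum_iff by (auto split: if_splits)

lemma kl_div_cong:
  assumes "\<And>a. a \<in> B \<Longrightarrow> P1 a = P2 a" "\<And>a. a \<in> B \<Longrightarrow> Q1 a = Q2 a"
  shows "kl_div B P1 Q1 = kl_div B P2 Q2"
proof -
  have e: "(\<exists>a\<in>B. P1 a > 0 \<and> Q1 a = 0) \<longleftrightarrow> (\<exists>a\<in>B. P2 a > 0 \<and> Q2 a = 0)" using assms by auto
  have f: "\<And>a. a \<in> B \<Longrightarrow> (if P1 a = 0 then 0 else P1 a * ln (P1 a / Q1 a))
                          = (if P2 a = 0 then 0 else P2 a * ln (P2 a / Q2 a))" using assms by simp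
  have sf: "(\<lambda>a. if P1 a = 0 then 0 else P1 a * ln (P1 a / Q1 a)) summable_on B \<longleftrightarrow>
            (\<lambda>a. if P2 a = 0 then 0 else P2 a * ln (P2 a / Q2 a)) summable_on B"
    by (rule summable_on_cong[OF f])
  have inf: "infsum (\<lambda>a. if P1 a = 0 then 0 else P1 a * ln (P1 a / Q1 a)) B =
            infsum (\<lambda>a. if P2 a = 0 then 0 else P2 a * ln (P2 a / Q2 a)) B"
    by (rule infsum_cong[OF f])
  show ?thesis by (simp only: kl_div_def e sf inf)
qed

lemma ring_id:
  fixes P u v L lu :: real
  shows "P * u * (lu + L) = P * v * L + P * (u * lu - u + v) + P * (1 + L) * (u - v)"
  by (simp add: algebra_simps)

lemma ring_id0:
  fixes P v L :: real
  shows "0 = P * v * L + P * v + P * (1 + L) * (0 - v)"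
  by (simp add: algebra_simps)

locale L12 =
  fixes X :: "'a set" and Y :: "'b set" and p :: "'a \<Rightarrow> 'b \<Rightarrow> real"
    and q :: "'a \<Rightarrow> 'b \<Rightarrow> nat \<Rightarrow> real"
  assumes finX: "finite X" and finY: "finite Y"
    and distr: "is_distr X Y p"
    and margX_pos: "\<forall>x\<in>X. margX Y p x > 0"
    and margY_pos: "\<forall>y\<in>Y. margY X p y > 0"
    and chan: "is_channel X Y q"
    and eqD: "kl_div UNIV (outT X Y p q) (outT_ind X Y p q) = dep_div X Y p"
begin

abbreviation "A \<equiv> X \<times> Y"
abbreviation "P a \<equiv> p (fst a) (snd a)"
abbreviation "K a t \<equiv> q (fst a) (snd a) t"
abbreviation "Q a \<equiv> margX Y p (fst a) * margY X p (snd a)"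
abbreviation "r a \<equiv> pmi_ratio X Y p (fst a) (snd a)"
abbreviation "PK \<equiv> outT X Y p q"
abbreviation "QK \<equiv> outT_ind X Y p q"
abbreviation "S \<equiv> supp X Y p"

lemma finA: "finite A" using finX finY by simp

lemma P_nonneg: "a \<in> A \<Longrightarrow> P a \<ge> 0"
  using distr unfolding is_distr_def by (cases a) auto

lemma K_nonneg: "a \<in> A \<Longrightarrow> K a t \<ge> 0"
  using chan unfolding is_channel_def by (cases a) auto

lemma K_sum: "a \<in> A \<Longrightarrow> (K a has_sum 1) UNIV"
  using chan unfolding is_channel_def by (cases a) auto

lemma Q_pos: "a \<in> A \<Longrightarrow> Q a > 0"
  using margX_pos margY_pos by (cases a) auto

lemma S_iff: "a \<in> S \<longleftrightarrow> a \<in> A \<and> P a > 0"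
  unfolding supp_def by (cases a) auto

lemma S_sub: "S \<subseteq> A" using S_iff by auto

lemma notS: "a \<in> A \<Longrightarrow> a \<notin> S \<Longrightarrow> P a = 0"
  using S_iff P_nonneg by force

lemma r_eq: "r a = P a / Q a"
  unfolding pmi_ratio_def by simp

lemma PK_eq: "PK t = (\<Sum>a\<in>A. P a * K a t)"
  unfolding outT_def by (simp add: case_prod_unfold)

lemma QK_eq: "QK t = (\<Sum>a\<in>A. Q a * K a t)"
  unfolding outT_ind_def by (simp add: case_prod_unfold)

lemma PK_ge: "a \<in> A \<Longrightarrow> P a * K a t \<le> PK t"
  unfolding PK_eq by (rule member_le_sum) (auto intro!: mult_nonneg_nonneg P_nonneg K_nonneg finA)

lemma QK_ge: "a \<in> A \<Longrightarrow> Q a * K a t \<le> QK t"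
  unfolding QK_eq by (rule member_le_sum) (auto intro!: mult_nonneg_nonneg less_imp_le[OF Q_pos] K_nonneg finA)

lemma PK_nonneg: "PK t \<ge> 0"
  unfolding PK_eq by (auto intro!: sum_nonneg mult_nonneg_nonneg P_nonneg K_nonneg)


abbreviation "e a \<equiv> (if P a = 0 then 0 else P a * ln (P a / Q a))"

lemma dep_val: "dep_div X Y p = ereal (\<Sum>a\<in>A. e a)"
proof -
  have "(\<lambda>(x, y). margX Y p x * margY X p y) a \<noteq> 0" if "a \<in> A" for a
  proof -
    have "Q a > 0" using Q_pos that .
    then show ?thesis unfolding case_prod_unfold by (metis less_irrefl)
  qed
  then have "\<not> (\<exists>a\<in>A. (\<lambda>(x, y). p x y) a > 0 \<and> (\<lambda>(x, y). margX Y p x * margY X p y) a = 0)"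
    by blast
  then show ?thesis unfolding dep_div_def kl_div_def using finA
    by (simp add: case_prod_unfold) (intro sum.cong; simp add: case_prod_beta)
qed

lemma f_has: "((\<lambda>t. if PK t = 0 then 0 else PK t * ln (PK t / QK t)) has_sum (\<Sum>a\<in>A. e a)) UNIV"
proof -
  have "kl_div UNIV PK QK = ereal (\<Sum>a\<in>A. e a)" using eqD dep_val by simp
  then show ?thesis unfolding kl_div_def
    by (auto split: if_splits simp: has_sum_iff)
qed

lemma g_has: "((\<lambda>t. (\<Sum>a\<in>A. e a * K a t) - (if PK t = 0 then 0 else PK t * ln (PK t / QK t))) has_sum 0) UNIV"
proof -
  have "((\<lambda>t. \<Sum>a\<in>A. e a * K a t) has_sum (\<Sum>a\<in>A. e a * 1)) UNIV"
    by (rule has_sum_finsum[OF finA]) (rule has_sum_cmult_right, rule K_sum)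
  from has_sum_diff'[OF this f_has] show ?thesis by simp
qed

lemma QK_pos: assumes "PK t > 0" shows "QK t > 0"
proof -
  have "\<exists>a\<in>A. P a * K a t \<noteq> 0"
  proof (rule ccontr)
    assume "\<not> ?thesis"
    then have "PK t = 0" unfolding PK_eq by (intro sum.neutral) auto
    then show False using assms by simp
  qed
  then obtain a where a: "a \<in> A" "P a * K a t \<noteq> 0" by blast
  then have "K a t \<noteq> 0" by auto
  then have "K a t > 0" using K_nonneg[OF a(1), of t] by linarith
  then have "Q a * K a t > 0" using Q_pos[OF a(1)] by simp
  then show ?thesis using QK_ge[OF a(1), of t] by linarith
qed

lemma g_decomp:
  assumes "PK t > 0"
  defines "R \<equiv> PK t / QK t"
  shows "(\<Sum>a\<in>A. e a * K a t) - (if PK t = 0 then 0 else PK t * ln (PK t / QK t))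
      = (\<Sum>a\<in>A. e a * K a t - P a * K a t * ln R - P a * K a t + R * Q a * K a t)"
proof -
  have QKp: "QK t > 0" using QK_pos assms by simp
  have "(\<Sum>a\<in>A. e a * K a t - P a * K a t * ln R - P a * K a t + R * Q a * K a t)
     = (\<Sum>a\<in>A. e a * K a t) - (\<Sum>a\<in>A. P a * K a t) * ln R - (\<Sum>a\<in>A. P a * K a t)
       + R * (\<Sum>a\<in>A. Q a * K a t)"
    by (simp add: sum.distrib sum_subtractf sum_distrib_left sum_distrib_right mult.assoc)
  also have "\<dots> = (\<Sum>a\<in>A. e a * K a t) - PK t * ln R - PK t + R * QK t"
    by (simp add: PK_eq QK_eq)
  also have "R * QK t = PK t" unfolding R_def using QKp by simp
  finally show ?thesis using assms unfolding R_def by simp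
qed

lemma dpi_eq:
  assumes a: "a \<in> A" and Kp: "K a t > 0" and PKp: "PK t > 0"
  shows "P a > 0 \<and> r a = PK t / QK t"
proof -
  define R where "R = PK t / QK t"
  have Rp: "R > 0" unfolding R_def using PKp QK_pos[OF PKp] by simp
  define h where "h b = e b * K b t - P b * K b t * ln R - P b * K b t + R * Q b * K b t" for b
  have hnn: "h b \<ge> 0" if "b \<in> A" for b unfolding h_def
    by (rule pt_ineq(1)[OF P_nonneg[OF that] Q_pos[OF that] K_nonneg[OF that] Rp])
  have "(\<lambda>t. (\<Sum>a\<in>A. e a * K a t) - (if PK t = 0 then 0 else PK t * ln (PK t / QK t))) t = 0"
  proof (rule nonneg_has_sum_le_0D[OF g_has order_refl])
    fix s :: nat
    show "0 \<le> (\<Sum>a\<in>A. e a * K a s) - (if PK s = 0 then 0 else PK s * ln (PK s / QK s))"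
    proof (cases "PK s > 0")
      case True
      have Rs: "PK s / QK s > 0" using True QK_pos[OF True] by simp
      show ?thesis unfolding g_decomp[OF True]
        by (rule sum_nonneg, rule pt_ineq(1)[OF P_nonneg Q_pos K_nonneg Rs])
    next
      case False
      then have PK0: "PK s = 0" using PK_nonneg[of s] by simp
      have eK0: "e b * K b s = 0" if b: "b \<in> A" for b
      proof -
        have "P b * K b s \<ge> 0" using P_nonneg[OF b] K_nonneg[OF b] by simp
        then have PK0b: "P b * K b s = 0" using PK_ge[OF b, of s] PK0 by simp
        show ?thesis
        proof (cases "P b = 0")
          case True then show ?thesis by simp
        next
          case False then have "K b s = 0" using PK0b by simp
          then show ?thesis by simp
        qed
      qed
      have "(\<Sum>b\<in>A. e b * K b s) = 0" by (rule sum.neutral) (use eK0 in blast)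
      then show ?thesis using PK0 by simp
    qed
  qed simp
  then have "(\<Sum>b\<in>A. h b) = 0" using g_decomp[OF PKp] unfolding h_def R_def by simp
  then have "\<forall>x\<in>A. h x = 0" using sum_nonneg_eq_0_iff[OF finA hnn] by simp
  then have "h a = 0" using a by (rule bspec)
  then have "P a > 0 \<and> P a / Q a = R"
    unfolding h_def by (rule pt_ineq(2)[OF P_nonneg[OF a] Q_pos[OF a] K_nonneg[OF a] Rp _ Kp])
  then show ?thesis unfolding R_def r_eq by simp
qed


definition cl :: "'a \<times> 'b \<Rightarrow> ('a \<times> 'b) set" where
  "cl a = {b \<in> S. r b = r a}"

abbreviation "cls \<equiv> supp_classes X Y p"

lemma cls_eq: "cls = cl ` S"
  unfolding supp_classes_def cl_def by (intro image_cong refl) (auto simp: case_prod_unfold)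

lemma in_cl: "b \<in> cl a \<longleftrightarrow> b \<in> S \<and> r b = r a"
  unfolding cl_def by simp

lemma cl_self: "a \<in> S \<Longrightarrow> a \<in> cl a" by (simp add: in_cl)

lemma cl_sub: "cl a \<subseteq> S" unfolding cl_def by auto

lemma cls_sub: "C \<in> cls \<Longrightarrow> C \<subseteq> S" using cl_sub cls_eq by auto

lemma cls_subA: "C \<in> cls \<Longrightarrow> C \<subseteq> A" using cls_sub S_sub by blast

lemma finS: "finite S" using finite_subset[OF S_sub finA] .

lemma fin_cls: "finite cls" using finS cls_eq by simp

lemma fin_C: "C \<in> cls \<Longrightarrow> finite C" using finite_subset[OF cls_sub finS] by blast

lemma mem_cls_iff: assumes "C \<in> cls" "a \<in> S" shows "a \<in> C \<longleftrightarrow> C = cl a"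
proof -
  obtain c where c: "c \<in> S" "C = cl c" using assms(1) cls_eq by auto
  show ?thesis
  proof
    assume "a \<in> C"
    then have "r a = r c" using c by (simp add: in_cl)
    then show "C = cl a" using c unfolding cl_def by simp
  next
    assume "C = cl a" then show "a \<in> C" using cl_self assms(2) by simp
  qed
qed

lemma cl_in_cls: "a \<in> S \<Longrightarrow> cl a \<in> cls" using cls_eq by simp

lemma cls_ne: assumes "C \<in> cls" shows "C \<noteq> {}"
proof -
  obtain c where c: "c \<in> S" "C = cl c" using assms cls_eq by auto
  then show ?thesis using cl_self[OF c(1)] by blast
qed

lemma same_t:
  assumes a: "a \<in> S" and b: "b \<in> A" and Ka: "K a t > 0" and Kb: "K b t > 0"
  shows "b \<in> S \<and> r b = r a"
proof -
  have aA: "a \<in> A" using a S_sub by blast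
  have "P a > 0" using a S_iff by blast
  then have "P a * K a t > 0" using Ka by simp
  then have PKp: "PK t > 0" using PK_ge[OF aA, of t] by linarith
  have 1: "r a = PK t / QK t" using dpi_eq[OF aA Ka PKp] by blast
  have 2: "P b > 0 \<and> r b = PK t / QK t" using dpi_eq[OF b Kb PKp] .
  show ?thesis using 1 2 b S_iff by simp
qed

lemma Tset_iff: "t \<in> Tset q C \<longleftrightarrow> (\<exists>b\<in>C. K b t > 0)"
  unfolding Tset_def by (auto simp: case_prod_unfold)

lemma Tset_disj:
  assumes C: "C \<in> cls" and C': "C' \<in> cls" and t: "t \<in> Tset q C" "t \<in> Tset q C'"
  shows "C = C'"
proof -
  obtain b where b: "b \<in> C" "K b t > 0" using t(1) Tset_iff by blast
  obtain b' where b': "b' \<in> C'" "K b' t > 0" using t(2) Tset_iff by blast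
  have bS: "b \<in> S" using b(1) cls_sub[OF C] by blast
  have b'A: "b' \<in> A" using b'(1) cls_subA[OF C'] by blast
  have "b' \<in> S \<and> r b' = r b" using same_t[OF bS b'A b(2) b'(2)] .
  then have "b' \<in> C" using mem_cls_iff[OF C bS] b(1) unfolding cl_def by simp
  then have "C = cl b'" using mem_cls_iff[OF C] \<open>b' \<in> S \<and> r b' = r b\<close> by blast
  moreover have "C' = cl b'" using mem_cls_iff[OF C'] \<open>b' \<in> S \<and> r b' = r b\<close> b'(1) by blast
  ultimately show ?thesis by simp
qed

lemma K_zero_outside:
  assumes a: "a \<in> A" and "t \<notin> Tset q C" and "a \<in> C"
  shows "K a t = 0"
proof -
  have "\<not> K a t > 0" using assms Tset_iff by blast
  then show ?thesis using K_nonneg[OF a, of t] by linarith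
qed

lemma part_i:
  assumes a: "a \<in> S" and C: "C \<in> cls"
  shows "infsum (K a) (Tset q C) = (if a \<in> C then 1 else 0)"
proof -
  have aA: "a \<in> A" using a S_sub by blast
  show ?thesis
  proof (cases "a \<in> C")
    case True
    have "infsum (K a) (Tset q C) = infsum (K a) UNIV"
      by (rule infsum_cong_neutral) (use K_zero_outside[OF aA _ True] in auto)
    also have "\<dots> = 1" using K_sum[OF aA] by (simp add: infsumI)
    finally show ?thesis using True by simp
  next
    case False
    have "K a t = 0" if t: "t \<in> Tset q C" for t
    proof (rule ccontr)
      assume "K a t \<noteq> 0"
      then have Kp: "K a t > 0" using K_nonneg[OF aA, of t] by linarith
      obtain b where b: "b \<in> C" "K b t > 0" using t Tset_iff by blast
      have bA: "b \<in> A" using b(1) cls_subA[OF C] by blast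
      have bS: "b \<in> S" using b(1) cls_sub[OF C] by blast
      have "r b = r a" using same_t[OF a bA Kp b(2)] by simp
      then have "a \<in> cl b" using a by (simp add: in_cl)
      moreover have "C = cl b" using mem_cls_iff[OF C bS] b(1) by simp
      ultimately show False using False by simp
    qed
    then have "infsum (K a) (Tset q C) = infsum (\<lambda>_. 0) (Tset q C)"
      by (intro infsum_cong) simp
    then show ?thesis using False by simp
  qed
qed


lemma Tset_iff_gen: "t \<in> Tset rr C \<longleftrightarrow> (\<exists>b\<in>C. rr (fst b) (snd b) t > 0)"
  unfolding Tset_def by (auto simp: case_prod_unfold)

lemma outT_eq: "outT X Y p rr t = (\<Sum>a\<in>A. P a * rr (fst a) (snd a) t)"
  unfolding outT_def by (simp add: case_prod_unfold)

definition pC :: "('a \<times> 'b) set \<Rightarrow> real" where "pC C = (\<Sum>a\<in>C. P a)"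

lemma pC_pos: assumes C: "C \<in> cls" shows "pC C > 0"
  unfolding pC_def
proof (rule sum_pos[OF fin_C[OF C] cls_ne[OF C]])
  fix a assume "a \<in> C"
  then have "a \<in> S" using cls_sub[OF C] by blast
  then show "P a > 0" using S_iff by blast
qed

lemma PK_has: assumes C: "C \<in> cls" shows "(PK has_sum pC C) (Tset q C)"
proof -
  have "((\<lambda>t. \<Sum>a\<in>A. P a * K a t) has_sum (\<Sum>a\<in>A. P a * infsum (K a) (Tset q C))) (Tset q C)"
  proof (rule has_sum_finsum[OF finA])
    fix a assume a: "a \<in> A"
    have "K a summable_on UNIV" using K_sum[OF a] by (auto simp: summable_on_def)
    then have "K a summable_on Tset q C" by (rule summable_on_subset) simp
    then show "((\<lambda>t. P a * K a t) has_sum P a * infsum (K a) (Tset q C)) (Tset q C)"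
      by (intro has_sum_cmult_right has_sum_infsum)
  qed
  moreover have "(\<Sum>a\<in>A. P a * infsum (K a) (Tset q C)) = (\<Sum>a\<in>A. if a \<in> C then P a else 0)"
  proof (rule sum.cong[OF refl])
    fix a assume a: "a \<in> A"
    show "P a * infsum (K a) (Tset q C) = (if a \<in> C then P a else 0)"
    proof (cases "a \<in> S")
      case True then show ?thesis using part_i[OF True C] by simp
    next
      case False
      then have "a \<notin> C" using cls_sub[OF C] by blast
      then show ?thesis using notS[OF a False] by simp
    qed
  qed
  moreover have "(\<Sum>a\<in>A. if a \<in> C then P a else 0) = pC C"
    unfolding pC_def using sum.inter_restrict[OF finA, of P C, symmetric] cls_subA[OF C]
    by (simp add: Int_absorb1)
  moreover have "PK = (\<lambda>t. \<Sum>a\<in>A. P a * K a t)" using PK_eq by (simp add: fun_eq_iff)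
  ultimately show ?thesis by simp
qed

lemma pi_eq: "C \<in> cls \<Longrightarrow> infsum PK (Tset q C) = pC C"
  using PK_has infsumI by blast

lemma qp_S:
  assumes a: "a \<in> S"
  shows "qprime X Y p q (fst a) (snd a) t = (if t \<in> Tset q (cl a) then PK t / pC (cl a) else 0)"
proof -
  have aS: "(fst a, snd a) \<in> S" using a by simp
  have "(\<Sum>C\<in>cls. condT X Y p q (Tset q C) t * infsum (q (fst a) (snd a)) (Tset q C))
      = (\<Sum>C\<in>cls. if C = cl a then condT X Y p q (Tset q C) t else 0)"
  proof (rule sum.cong[OF refl])
    fix C assume C: "C \<in> cls"
    show "condT X Y p q (Tset q C) t * infsum (q (fst a) (snd a)) (Tset q C)
        = (if C = cl a then condT X Y p q (Tset q C) t else 0)"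
      using part_i[OF a C] mem_cls_iff[OF C a] by simp
  qed
  also have "\<dots> = condT X Y p q (Tset q (cl a)) t"
    using fin_cls cl_in_cls[OF a] by simp
  also have "\<dots> = (if t \<in> Tset q (cl a) then PK t / pC (cl a) else 0)"
    unfolding condT_def using pi_eq[OF cl_in_cls[OF a]] by simp
  finally show ?thesis unfolding qprime_def using aS by simp
qed

lemma qp_notS: "a \<notin> S \<Longrightarrow> qprime X Y p q (fst a) (snd a) t = K a t"
  unfolding qprime_def by simp

lemma PK_pos_T: assumes C: "C \<in> cls" and t: "t \<in> Tset q C" shows "PK t > 0"
proof -
  obtain b where b: "b \<in> C" "K b t > 0" using t Tset_iff by blast
  have bS: "b \<in> S" using b(1) cls_sub[OF C] by blast
  then have bA: "b \<in> A" "P b > 0" using S_iff by auto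
  then have "P b * K b t > 0" using b(2) by simp
  then show ?thesis using PK_ge[OF bA(1), of t] by linarith
qed

lemma part_ii: "outT X Y p (qprime X Y p q) t = PK t"
proof (cases "\<exists>C\<in>cls. t \<in> Tset q C")
  case True
  then obtain C where C: "C \<in> cls" "t \<in> Tset q C" by blast
  have "(\<Sum>a\<in>A. P a * qprime X Y p q (fst a) (snd a) t) = (\<Sum>a\<in>A. if a \<in> C then P a * (PK t / pC C) else 0)"
  proof (rule sum.cong[OF refl])
    fix a assume a: "a \<in> A"
    show "P a * qprime X Y p q (fst a) (snd a) t = (if a \<in> C then P a * (PK t / pC C) else 0)"
    proof (cases "a \<in> S")
      case True
      have "t \<in> Tset q (cl a) \<longleftrightarrow> cl a = C"
        using Tset_disj[OF cl_in_cls[OF True] C(1) _ C(2)] C(2) by blast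
      then show ?thesis using qp_S[OF True, of t] mem_cls_iff[OF C(1) True] by auto
    next
      case False
      then have "a \<notin> C" using cls_sub[OF C(1)] by blast
      then show ?thesis using notS[OF a False] by simp
    qed
  qed
  also have "\<dots> = (\<Sum>a\<in>C. P a * (PK t / pC C))"
    using sum.inter_restrict[OF finA, of "\<lambda>a. P a * (PK t / pC C)" C, symmetric] cls_subA[OF C(1)]
    by (simp add: Int_absorb1)
  also have "\<dots> = pC C * (PK t / pC C)" unfolding pC_def by (rule sum_distrib_right[symmetric])
  also have "\<dots> = PK t" using pC_pos[OF C(1)] by simp
  finally show ?thesis unfolding outT_eq .
next
  case False
  have "(\<Sum>a\<in>A. P a * qprime X Y p q (fst a) (snd a) t) = 0"
  proof (rule sum.neutral, rule ballI)
    fix a assume a: "a \<in> A"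
    show "P a * qprime X Y p q (fst a) (snd a) t = 0"
    proof (cases "a \<in> S")
      case True
      then have "t \<notin> Tset q (cl a)" using False cl_in_cls by blast
      then show ?thesis using qp_S[OF True, of t] by simp
    next
      case False then show ?thesis using notS[OF a False] by simp
    qed
  qed
  moreover have "PK t = 0" unfolding PK_eq
  proof (rule sum.neutral, rule ballI)
    fix a assume a: "a \<in> A"
    show "P a * K a t = 0"
    proof (cases "a \<in> S")
      case True
      then have "t \<notin> Tset q (cl a)" using False cl_in_cls by blast
      then have "K a t = 0" using K_zero_outside[OF a _ cl_self[OF True]] by blast
      then show ?thesis by simp
    next
      case False then show ?thesis using notS[OF a False] by simp
    qed
  qed
  ultimately show ?thesis unfolding outT_eq by simp
qed

lemma part_iii: assumes C: "C \<in> cls" shows "Tset q C = Tset (qprime X Y p q) C"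
proof (rule set_eqI)
  fix t
  have qpC: "qprime X Y p q (fst b) (snd b) t = (if t \<in> Tset q C then PK t / pC C else 0)"
    if b: "b \<in> C" for b
  proof -
    have bS: "b \<in> S" using b cls_sub[OF C] by blast
    have "cl b = C" using mem_cls_iff[OF C bS] b by simp
    then show ?thesis using qp_S[OF bS, of t] by simp
  qed
  show "t \<in> Tset q C \<longleftrightarrow> t \<in> Tset (qprime X Y p q) C"
  proof
    assume t: "t \<in> Tset q C"
    obtain b where b: "b \<in> C" "K b t > 0" using t Tset_iff by blast
    have "PK t / pC C > 0" using PK_pos_T[OF C t] pC_pos[OF C] by simp
    then have "qprime X Y p q (fst b) (snd b) t > 0" using qpC[OF b(1)] t by simp
    then show "t \<in> Tset (qprime X Y p q) C" using b(1) Tset_iff_gen by blast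
  next
    assume "t \<in> Tset (qprime X Y p q) C"
    then obtain b where b: "b \<in> C" "qprime X Y p q (fst b) (snd b) t > 0" using Tset_iff_gen by blast
    then show "t \<in> Tset q C" using qpC[OF b(1)] by (cases "t \<in> Tset q C") auto
  qed
qed


abbreviation "K' a t \<equiv> qprime X Y p q (fst a) (snd a) t"
abbreviation "pia a \<equiv> pC (cl a)"
abbreviation "l a \<equiv> ln (1 / pia a)"

definition Dv :: "real \<Rightarrow> real \<Rightarrow> real" where
  "Dv u v = (if u = 0 then 0 else u * ln (u / v)) - u + v"

definition G :: "('a \<times> 'b) \<times> nat \<Rightarrow> real" where
  "G z = (if fst z \<in> S then P (fst z) * K' (fst z) (snd z) * l (fst z) else 0)"
definition H :: "('a \<times> 'b) \<times> nat \<Rightarrow> real" where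
  "H z = (if fst z \<in> S then P (fst z) * Dv (K (fst z) (snd z)) (K' (fst z) (snd z)) else 0)"
definition Lz :: "('a \<times> 'b) \<times> nat \<Rightarrow> real" where
  "Lz z = (if fst z \<in> S then P (fst z) * (1 + l (fst z)) * (K (fst z) (snd z) - K' (fst z) (snd z)) else 0)"

abbreviation "Pq z \<equiv> P (fst z) * K (fst z) (snd z)"
abbreviation "Pq' z \<equiv> P (fst z) * K' (fst z) (snd z)"
abbreviation "Qq z \<equiv> P (fst z) * PK (snd z)"
abbreviation "Fq z \<equiv> (if Pq z = 0 then 0 else Pq z * ln (Pq z / Qq z))"
abbreviation "Fq' z \<equiv> (if Pq' z = 0 then 0 else Pq' z * ln (Pq' z / Qq z))"

lemma mutinf_q: "mutinf X Y p q = kl_div (A \<times> UNIV) Pq Qq"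
  unfolding mutinf_def by (simp add: case_prod_unfold)

lemma mutinf_q': "mutinf X Y p (qprime X Y p q) = kl_div (A \<times> UNIV) Pq' Qq"
  unfolding mutinf_def part_ii by (simp add: case_prod_unfold)

lemma pia_pos: "a \<in> S \<Longrightarrow> pia a > 0" using pC_pos cl_in_cls by blast

lemma K'_S: "a \<in> S \<Longrightarrow> K' a t = (if t \<in> Tset q (cl a) then PK t / pia a else 0)"
  using qp_S by blast

lemma K_pos_T: assumes a: "a \<in> S" and "K a t > 0" shows "t \<in> Tset q (cl a)"
  using assms cl_self[OF a] Tset_iff by blast

lemma K'_pos: assumes a: "a \<in> S" and "K a t > 0" shows "K' a t > 0"
proof -
  have t: "t \<in> Tset q (cl a)" using K_pos_T assms by blast
  have "PK t > 0" using PK_pos_T[OF cl_in_cls[OF a] t] .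
  then show ?thesis using K'_S[OF a, of t] t pia_pos[OF a] by simp
qed

lemma K'_nonneg: assumes a: "a \<in> A" shows "K' a t \<ge> 0"
proof (cases "a \<in> S")
  case True then show ?thesis using K'_S[OF True, of t] pia_pos[OF True] PK_nonneg[of t] by simp
next
  case False then show ?thesis using qp_notS K_nonneg[OF a] by simp
qed

lemma Fq'_eq: assumes a: "a \<in> A" shows "Fq' (a,t) = G (a,t)"
proof (cases "a \<in> S")
  case False then show ?thesis using notS[OF a False] unfolding G_def by simp
next
  case True
  show ?thesis
  proof (cases "t \<in> Tset q (cl a)")
    case False then show ?thesis using K'_S[OF True, of t] unfolding G_def by simp
  next
    case tT: True
    have PKp: "PK t > 0" using PK_pos_T[OF cl_in_cls[OF True] tT] .
    have pp: "pia a > 0" using pia_pos[OF True] .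
    have Pp: "P a > 0" using True S_iff by blast
    have K'eq: "K' a t = PK t / pia a" by (simp only: K'_S[OF True, of t] tT if_True)
    have "P a * K' a t / (P a * PK t) = 1 / pia a" using Pp PKp pp K'eq by simp
    moreover have "P a * K' a t \<noteq> 0" using Pp PKp pp K'eq by simp
    ultimately show ?thesis unfolding G_def using True by simp
  qed
qed

lemma Fq_eq: assumes a: "a \<in> A" shows "Fq (a,t) = G (a,t) + H (a,t) + Lz (a,t)"
proof (cases "a \<in> S")
  case False then show ?thesis using notS[OF a False] unfolding G_def H_def Lz_def by simp
next
  case True
  have Pp: "P a > 0" using True S_iff by blast
  have Gv: "G (a,t) = P a * K' a t * l a" using True unfolding G_def by simp
  have Hv: "H (a,t) = P a * Dv (K a t) (K' a t)" using True unfolding H_def by simp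
  have Lv: "Lz (a,t) = P a * (1 + l a) * (K a t - K' a t)" using True unfolding Lz_def by simp
  show ?thesis
  proof (cases "K a t = 0")
    case True0: True
    have "Fq (a,t) = 0" using True0 by simp
    moreover have "Dv (K a t) (K' a t) = K' a t" unfolding Dv_def using True0 by simp
    ultimately show ?thesis unfolding Gv Hv Lv using True0 by (simp add: algebra_simps)
  next
    case False
    then have Kp: "K a t > 0" using K_nonneg[OF a, of t] by linarith
    have tT: "t \<in> Tset q (cl a)" using K_pos_T[OF True Kp] .
    have PKp: "PK t > 0" using PK_pos_T[OF cl_in_cls[OF True] tT] .
    have pp: "pia a > 0" using pia_pos[OF True] .
    have K'eq: "K' a t = PK t / pia a" by (simp only: K'_S[OF True, of t] tT if_True)
    have K'p: "K' a t > 0" using K'eq PKp pp by simp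
    have e1: "P a * K a t / (P a * PK t) = (K a t / K' a t) * (1 / pia a)"
      unfolding K'eq using Pp PKp pp by (simp add: field_simps)
    have e2: "ln ((K a t / K' a t) * (1 / pia a)) = ln (K a t / K' a t) + ln (1 / pia a)"
      by (rule ln_mult_pos) (use Kp K'p pp in auto)
    have lnsplit: "ln (P a * K a t / (P a * PK t)) = ln (K a t / K' a t) + l a"
      unfolding e1 by (rule e2)
    have "Fq (a,t) = P a * K a t * (ln (K a t / K' a t) + l a)"
      using Pp Kp lnsplit by simp
    moreover have "Dv (K a t) (K' a t) = K a t * ln (K a t / K' a t) - K a t + K' a t"
      unfolding Dv_def using False by simp
    ultimately show ?thesis unfolding Gv Hv Lv
      by (simp only: ring_id[where P="P a" and u="K a t" and v="K' a t" and L="l a" and lu="ln (K a t / K' a t)"])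
  qed
qed

lemma Dv_props:
  assumes u: "u \<ge> 0" and v: "v \<ge> 0" and uv: "u > 0 \<Longrightarrow> v > 0"
  shows "Dv u v \<ge> 0" and "Dv u v = 0 \<Longrightarrow> u = v"
proof -
  have "Dv u v \<ge> 0 \<and> (Dv u v = 0 \<longrightarrow> u = v)"
  proof (cases "v > 0")
    case True
    have eq: "Dv u v = (if u = 0 then 0 else u * ln (u / v)) * 1 - u * 1 * ln 1 - u * 1 + 1 * v * 1"
      unfolding Dv_def by simp
    have "0 \<le> Dv u v" unfolding eq by (rule pt_ineq(1)) (use u True in auto)
    moreover have "u = v" if "Dv u v = 0"
    proof -
      have "u > 0 \<and> u / v = 1" by (rule pt_ineq(2)[OF u True _ _ that[unfolded eq]]) auto
      then show ?thesis using True by simp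
    qed
    ultimately show ?thesis by blast
  next
    case False
    then have "v = 0" using v by simp
    moreover then have "u = 0" using uv u by force
    ultimately show ?thesis unfolding Dv_def by simp
  qed
  then show "Dv u v \<ge> 0" and "Dv u v = 0 \<Longrightarrow> u = v" by auto
qed

lemma Dv_zero: "u \<ge> 0 \<Longrightarrow> v \<ge> 0 \<Longrightarrow> (u > 0 \<Longrightarrow> v > 0) \<Longrightarrow> Dv u v = 0 \<Longrightarrow> u = v"
  using Dv_props(2) by blast

lemma H_nonneg: assumes z: "z \<in> A \<times> UNIV" shows "H z \<ge> 0"
proof (cases "fst z \<in> S")
  case False then show ?thesis unfolding H_def by simp
next
  case True
  have a: "fst z \<in> A" using z by auto
  have "Dv (K (fst z) (snd z)) (K' (fst z) (snd z)) \<ge> 0"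
    by (rule Dv_props(1)[OF K_nonneg[OF a] K'_nonneg[OF a] K'_pos[OF True]])
  then show ?thesis using True P_nonneg[OF a] unfolding H_def by simp
qed

lemma H_zero: assumes a: "a \<in> S" and "H (a,t) = 0" shows "K a t = K' a t"
proof -
  have aA: "a \<in> A" using a S_sub by blast
  have Pp: "P a > 0" using a S_iff by blast
  have "Dv (K a t) (K' a t) = 0" using assms Pp unfolding H_def by simp
  show ?thesis
  proof (rule Dv_zero)
    show "0 \<le> K a t" by (rule K_nonneg[OF aA])
    show "0 \<le> K' a t" by (rule K'_nonneg[OF aA])
    show "0 < K a t \<Longrightarrow> 0 < K' a t" by (rule K'_pos[OF a])
    show "Dv (K a t) (K' a t) = 0" by fact
  qed
qed

lemma K'_sum: assumes a: "a \<in> S" shows "(K' a has_sum 1) UNIV"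
proof -
  have C: "cl a \<in> cls" using cl_in_cls[OF a] .
  have "((\<lambda>t. PK t * (1 / pia a)) has_sum (pia a * (1 / pia a))) (Tset q (cl a))"
    by (rule has_sum_cmult_left[OF PK_has[OF C]])
  then have "((\<lambda>t. PK t / pia a) has_sum 1) (Tset q (cl a))" using pia_pos[OF a] by simp
  moreover have "((\<lambda>t. PK t / pia a) has_sum 1) (Tset q (cl a)) \<longleftrightarrow> (K' a has_sum 1) UNIV"
    by (rule has_sum_cong_neutral) (auto simp: K'_S[OF a])
  ultimately show ?thesis by simp
qed

definition I' :: real where "I' = (\<Sum>a\<in>A. if a \<in> S then P a * l a else 0)"

lemma G_has: "(G has_sum I') (A \<times> UNIV)"
  unfolding I'_def
proof (rule has_sum_prod_finite[OF finA])
  fix a assume a: "a \<in> A"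
  show "((\<lambda>t. G (a, t)) has_sum (if a \<in> S then P a * l a else 0)) UNIV"
  proof (cases "a \<in> S")
    case True
    have "((\<lambda>t. P a * K' a t * l a) has_sum (P a * 1 * l a)) UNIV"
      by (intro has_sum_cmult_left has_sum_cmult_right K'_sum[OF True])
    then show ?thesis using True unfolding G_def by simp
  next
    case False then show ?thesis unfolding G_def by simp
  qed
qed

lemma L_has: "(Lz has_sum 0) (A \<times> UNIV)"
proof -
  have "(Lz has_sum (\<Sum>a\<in>A. 0)) (A \<times> UNIV)"
  proof (rule has_sum_prod_finite[OF finA])
    fix a assume a: "a \<in> A"
    show "((\<lambda>t. Lz (a, t)) has_sum 0) UNIV"
    proof (cases "a \<in> S")
      case True
      have "((\<lambda>t. K a t - K' a t) has_sum (1 - 1)) UNIV"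
        by (rule has_sum_diff'[OF K_sum[OF a] K'_sum[OF True]])
      then have "((\<lambda>t. P a * (1 + l a) * (K a t - K' a t)) has_sum (P a * (1 + l a) * (1 - 1))) UNIV"
        by (rule has_sum_cmult_right)
      then show ?thesis using True unfolding Lz_def by simp
    next
      case False then show ?thesis unfolding Lz_def by simp
    qed
  qed
  then show ?thesis by simp
qed

lemma noinf_q: "\<not> (\<exists>z\<in>A \<times> UNIV. Pq z > 0 \<and> Qq z = 0)"
proof
  assume "\<exists>z\<in>A \<times> UNIV. Pq z > 0 \<and> Qq z = 0"
  then obtain a t where a: "a \<in> A" and pos: "P a * K a t > 0" and z: "P a * PK t = 0" by auto
  have "PK t > 0" using PK_ge[OF a, of t] pos by linarith
  moreover have "P a \<noteq> 0" using pos by auto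
  ultimately show False using z by simp
qed

lemma noinf_q': "\<not> (\<exists>z\<in>A \<times> UNIV. Pq' z > 0 \<and> Qq z = 0)"
proof
  assume "\<exists>z\<in>A \<times> UNIV. Pq' z > 0 \<and> Qq z = 0"
  then obtain a t where a: "a \<in> A" and pos: "P a * K' a t > 0" and z: "P a * PK t = 0" by auto
  have Pn: "P a \<noteq> 0" using pos by auto
  then have aS: "a \<in> S" using notS[OF a] by blast
  have "K' a t \<noteq> 0" using pos by auto
  then have t: "t \<in> Tset q (cl a)" using K'_S[OF aS, of t] by (cases "t \<in> Tset q (cl a)") auto
  have "PK t > 0" using PK_pos_T[OF cl_in_cls[OF aS] t] .
  then show False using z Pn by simp
qed

lemma mutinf_q'_val: "mutinf X Y p (qprime X Y p q) = ereal I'"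
proof -
  have eqs: "Fq' z = G z" if z: "z \<in> A \<times> UNIV" for z
  proof (cases z)
    case (Pair a t)
    with z have a: "a \<in> A" by auto
    from Fq'_eq[OF a, of t] show ?thesis unfolding Pair .
  qed
  have "(Fq' has_sum I') (A \<times> UNIV)"
    using G_has has_sum_cong[of "A \<times> UNIV" Fq' G, OF eqs] by blast
  then show ?thesis unfolding mutinf_q' by (rule kl_div_fin[OF noinf_q'])
qed

lemma H_has: assumes "(Fq has_sum I) (A \<times> UNIV)" shows "(H has_sum (I - I' - 0)) (A \<times> UNIV)"
proof -
  have h1: "((\<lambda>z. Fq z - G z - Lz z) has_sum (I - I' - 0)) (A \<times> UNIV)"
    by (rule has_sum_diff'[OF has_sum_diff'[OF assms G_has] L_has])
  have eq: "Fq z - G z - Lz z = H z" if z: "z \<in> A \<times> UNIV" for z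
  proof (cases z)
    case (Pair a t)
    with z have a: "a \<in> A" by auto
    have "Fq (a,t) = G (a,t) + H (a,t) + Lz (a,t)" by (rule Fq_eq[OF a])
    then have "Fq (a,t) - G (a,t) - Lz (a,t) = H (a,t)" by (simp only: diff_add_cancel add_diff_cancel_right' add_diff_cancel_left' diff_diff_eq add.commute)
    then show ?thesis unfolding Pair .
  qed
  have "((\<lambda>z. Fq z - G z - Lz z) has_sum (I - I' - 0)) (A \<times> UNIV) \<longleftrightarrow> (H has_sum (I - I' - 0)) (A \<times> UNIV)"
    by (rule has_sum_cong) (rule eq)
  then show ?thesis using h1 by (rule iffD1)
qed

lemma part_iv:
  shows "mutinf X Y p q \<ge> mutinf X Y p (qprime X Y p q)"
    and "mutinf X Y p q = mutinf X Y p (qprime X Y p q) \<longleftrightarrow>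
          (\<forall>x\<in>X. \<forall>y\<in>Y. \<forall>t. q x y t = qprime X Y p q x y t)"
proof -
  show "mutinf X Y p q \<ge> mutinf X Y p (qprime X Y p q)"
  proof (cases "Fq summable_on (A \<times> UNIV)")
    case True
    then have Fh: "(Fq has_sum infsum Fq (A \<times> UNIV)) (A \<times> UNIV)" by simp
    have "infsum Fq (A \<times> UNIV) - I' - 0 \<ge> 0"
      by (rule has_sum_nonneg[OF H_has[OF Fh]]) (rule H_nonneg)
    moreover have "mutinf X Y p q = ereal (infsum Fq (A \<times> UNIV))"
      unfolding mutinf_q by (rule kl_div_fin[OF noinf_q Fh])
    ultimately show ?thesis using mutinf_q'_val by simp
  next
    case False
    then have "mutinf X Y p q = PInfty" unfolding mutinf_q by (rule kl_div_inf)
    then show ?thesis by simp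
  qed
  show "mutinf X Y p q = mutinf X Y p (qprime X Y p q) \<longleftrightarrow>
          (\<forall>x\<in>X. \<forall>y\<in>Y. \<forall>t. q x y t = qprime X Y p q x y t)"
  proof
    assume eq: "mutinf X Y p q = mutinf X Y p (qprime X Y p q)"
    then have "kl_div (A \<times> UNIV) Pq Qq = ereal I'" using mutinf_q'_val mutinf_q by simp
    then have Fh: "(Fq has_sum I') (A \<times> UNIV)" by (rule kl_div_finD)
    have Hh: "(H has_sum 0) (A \<times> UNIV)" using H_has[OF Fh] by simp
    show "\<forall>x\<in>X. \<forall>y\<in>Y. \<forall>t. q x y t = qprime X Y p q x y t"
    proof (intro ballI allI)
      fix x y t assume x: "x \<in> X" and y: "y \<in> Y"
      have aA: "(x,y) \<in> A" using x y by simp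
      show "q x y t = qprime X Y p q x y t"
      proof (cases "(x,y) \<in> S")
        case True
        have "H ((x,y),t) = 0"
          by (rule nonneg_has_sum_le_0D[OF Hh order_refl]) (use H_nonneg aA in auto)
        from H_zero[OF True this] show ?thesis by simp
      next
        case False
        from qp_notS[OF False, of t] show ?thesis by simp
      qed
    qed
  next
    assume h: "\<forall>x\<in>X. \<forall>y\<in>Y. \<forall>t. q x y t = qprime X Y p q x y t"
    have "kl_div (A \<times> UNIV) Pq Qq = kl_div (A \<times> UNIV) Pq' Qq"
      by (rule kl_div_cong) (use h in auto)
    then show "mutinf X Y p q = mutinf X Y p (qprime X Y p q)" using mutinf_q mutinf_q' by simp
  qed
qed

end


theorem lemma12:
  fixes X :: "'a set" and Y :: "'b set" and p :: "'a \<Rightarrow> 'b \<Rightarrow> real"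
    and q :: "'a \<Rightarrow> 'b \<Rightarrow> nat \<Rightarrow> real"
  assumes finX: "finite X" and finY: "finite Y"
    and distr: "is_distr X Y p"
    and margX_pos: "\<forall>x\<in>X. margX Y p x > 0"
    and margY_pos: "\<forall>y\<in>Y. margY X p y > 0"
    and chan: "is_channel X Y q"
    and eqD: "kl_div UNIV (outT X Y p q) (outT_ind X Y p q) = dep_div X Y p"
  shows "(\<forall>(x,y)\<in>supp X Y p. \<forall>C\<in>supp_classes X Y p.
            infsum (q x y) (Tset q C) = (if (x,y) \<in> C then 1 else 0))
       \<and> (\<forall>t. outT X Y p (qprime X Y p q) t = outT X Y p q t)
       \<and> (\<forall>C\<in>supp_classes X Y p. Tset q C = Tset (qprime X Y p q) C)
       \<and> mutinf X Y p q \<ge> mutinf X Y p (qprime X Y p q)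
       \<and> (mutinf X Y p q = mutinf X Y p (qprime X Y p q) \<longleftrightarrow>
            (\<forall>x\<in>X. \<forall>y\<in>Y. \<forall>t. q x y t = qprime X Y p q x y t))"
proof -
  interpret L: L12 X Y p q
    by (rule L12.intro) (rule assms)+
  have i: "\<forall>(x,y)\<in>supp X Y p. \<forall>C\<in>supp_classes X Y p.
            infsum (q x y) (Tset q C) = (if (x,y) \<in> C then 1 else 0)"
  proof (intro ballI, clarify)
    fix x y C assume xy: "(x,y) \<in> supp X Y p" and C: "C \<in> supp_classes X Y p"
    from L.part_i[OF xy C] show "infsum (q x y) (Tset q C) = (if (x,y) \<in> C then 1 else 0)"
      by simp
  qed
  show ?thesis using i L.part_ii L.part_iii L.part_iv by blast
qed

end
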